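(* Let $n\ge 3$, let $a>0$ be a constant, and let $f$ be continuous on $(0,\infty)$ with $\lim_{t\to\infty}f(t)=0$. Let $y$ be a solution of \[ y''+\frac{n-1}{t}y'+\frac{a+f(t)}{t^2}y=0 \] that is bounded on some interval $(t_0,\infty)$. Then $\lim_{t\to\infty}y(t)=0$. *)

theory Defs
  imports "HOL-Analysis.Analysis"
begin

end

theory Submission
  imports Defs
begin

lemma aux_ineq:
  fixes c a e f Y V P tD :: real
  assumes tD: "tD = - c * V - c * (a + f) * Y - 2 * P"
  and cr: "\<bar>2 * P\<bar> \<le> e * (Y + V)"
  and cf: "- c * e * Y \<le> c * f * Y"
  and m1: "0 \<le> (c/2 - e) * V"
  and m2: "0 \<le> (c*a/2 - c*e - e) * Y"
  shows "tD \<le> - (c/2) * V - (c*a/2) * Y"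
proof -
  have "tD = - c * V - c * a * Y - c * f * Y - 2 * P" using tD by (simp add: algebra_simps)
  moreover have "2 * P \<ge> - (e * Y) - e * V" using cr by (simp add: abs_le_iff algebra_simps)
  moreover have "c/2 * V - e * V \<ge> 0" using m1 by (simp add: algebra_simps)
  moreover have "c*a/2 * Y - c * e * Y - e * Y \<ge> 0" using m2 by (simp add: algebra_simps)
  moreover have "- (c * e * Y) \<le> c * f * Y" using cf by simp
  ultimately show ?thesis by (simp add: algebra_simps)
qed

theorem lemma3p4:
  fixes n :: nat and a t0 :: real and f y y' y'' :: "real \<Rightarrow> real"
  assumes n: "n \<ge> 3"
    and a: "a > 0"
    and f_cont: "continuous_on {0<..} f"
    and f_lim: "(f \<longlongrightarrow> 0) at_top"
    and dy: "\<And>t. t > 0 \<Longrightarrow> (y has_real_derivative y' t) (at t)"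
    and dy': "\<And>t. t > 0 \<Longrightarrow> (y' has_real_derivative y'' t) (at t)"
    and ode: "\<And>t. t > 0 \<Longrightarrow>
                y'' t + (real n - 1) / t * y' t + (a + f t) / t\<^sup>2 * y t = 0"
    and t0: "t0 > 0"
    and bdd: "\<exists>M. \<forall>t > t0. \<bar>y t\<bar> \<le> M"
  shows "(y \<longlongrightarrow> 0) at_top"
proof -
  define c where "c = real n - 2"
  have c1: "c \<ge> 1" using n by (simp add: c_def)
  define \<beta> where "\<beta> = a + c^2/2"
  define v where "v t = t * y' t" for t
  define W where "W t = (v t)^2 + c * y t * v t + \<beta> * (y t)^2" for t
  define D where "D t = (- c * (v t)^2 - c * (a + f t) * (y t)^2 - 2 * f t * y t * v t) / t" for t
  have dv: "(v has_real_derivative (- c * y' t - (a + f t) * y t / t)) (at t)" if t: "t > 0" for t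
  proof -
    have "(v has_real_derivative (y' t + t * y'' t)) (at t)"
      unfolding v_def[abs_def] using dy'[OF t]
      by (auto intro!: derivative_eq_intros)
    moreover have "y' t + t * y'' t = - c * y' t - (a + f t) * y t / t"
    proof -
      have "t^2 * (y'' t + (real n - 1) / t * y' t + (a + f t) / t\<^sup>2 * y t) = 0" using ode[OF t] by simp
      moreover have "t^2 * ((real n - 1) / t * y' t) = (real n - 1) * t * y' t"
        using t by (simp add: power2_eq_square)
      moreover have "t^2 * ((a + f t) / t\<^sup>2 * y t) = (a + f t) * y t"
        using t by simp
      ultimately have e: "t * (t * y'' t) + (real n - 1) * t * y' t + (a + f t) * y t = 0"
        by (simp only: distrib_left power2_eq_square mult.assoc)
      have "t * (t * y'' t) = t * (- (real n - 1) * y' t - (a + f t) * y t / t)"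
      proof -
        have "t * (- (real n - 1) * y' t - (a + f t) * y t / t) = - (real n - 1) * t * y' t - (a + f t) * y t"
          using t by (simp add: right_diff_distrib)
        thus ?thesis using e by linarith
      qed
      hence "t * y'' t = - (real n - 1) * y' t - (a + f t) * y t / t"
        using t by simp
      thus ?thesis unfolding c_def by (simp add: algebra_simps)
    qed
    ultimately show ?thesis by simp
  qed
  have dW: "(W has_real_derivative D t) (at t)" if t: "t > 0" for t
  proof -
    have "(W has_real_derivative (2 * v t * (- c * y' t - (a + f t) * y t / t)
       + c * (y' t * v t + y t * (- c * y' t - (a + f t) * y t / t)) + \<beta> * (2 * y t * y' t))) (at t)"
      unfolding W_def[abs_def] using dy[OF t] dv[OF t]
      by (auto intro!: derivative_eq_intros simp: algebra_simps)
    moreover have "2 * v t * (- c * y' t - (a + f t) * y t / t)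
       + c * (y' t * v t + y t * (- c * y' t - (a + f t) * y t / t)) + \<beta> * (2 * y t * y' t) = D t"
      using t unfolding D_def v_def \<beta>_def by (simp add: field_simps power2_eq_square)
    ultimately show ?thesis by simp
  qed
  define \<epsilon> where "\<epsilon> = min (1/2) (a/4)"
  have eps: "\<epsilon> > 0" "\<epsilon> \<le> 1/2" "\<epsilon> \<le> a/4" using a by (auto simp: \<epsilon>_def)
  have "\<forall>\<^sub>F t in at_top. \<bar>f t\<bar> < \<epsilon>"
    using f_lim eps(1) by (simp add: tendsto_iff dist_real_def) 
  then obtain T0 where T0: "\<And>t. t \<ge> T0 \<Longrightarrow> \<bar>f t\<bar> < \<epsilon>" by (auto simp: eventually_at_top_linorder)
  define T where "T = max 1 T0"
  have T: "T > 0" "T \<ge> T0" by (auto simp: T_def)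
  define k where "k = min (c / (2 + c)) (c * a / (2 * a + c^2 + c))"
  have kpos: "k > 0"
  proof -
    have "2 * a + c^2 + c > 0" using a c1 by (simp add: add_pos_nonneg)
    moreover have "c * a > 0" using a c1 by simp
    ultimately have "c * a / (2 * a + c^2 + c) > 0" by simp
    moreover have "c / (2 + c) > 0" using c1 by simp
    ultimately show ?thesis by (simp add: k_def)
  qed
  have k1: "k * (1 + c/2) \<le> c/2"
  proof -
    have "k \<le> c / (2 + c)" by (simp add: k_def)
    hence "k * (2 + c) \<le> c" using c1 by (simp add: field_simps)
    thus ?thesis by (simp add: algebra_simps)
  qed
  have k2: "k * (\<beta> + c/2) \<le> c * a / 2"
  proof -
    have "k \<le> c * a / (2 * a + c^2 + c)" by (simp add: k_def)
    moreover have "2 * a + c^2 + c > 0" using a c1 by (simp add: add_pos_nonneg)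
    ultimately have "k * (2 * a + c^2 + c) \<le> c * a" by (simp add: field_simps)
    thus ?thesis by (simp add: \<beta>_def algebra_simps)
  qed
  have key: "t * D t \<le> - k * W t" if t: "t \<ge> T" for t
  proof -
    have tp: "t > 0" using t T by linarith
    have fe: "\<bar>f t\<bar> \<le> \<epsilon>" using T0[of t] t T by linarith
    have tD: "t * D t = - c * (v t)^2 - c * (a + f t) * (y t)^2 - 2 * f t * y t * v t"
      using tp by (simp add: D_def)
    have cr: "\<bar>2 * f t * y t * v t\<bar> \<le> \<epsilon> * ((y t)^2 + (v t)^2)"
    proof -
      have "\<bar>2 * y t * v t\<bar> \<le> (y t)^2 + (v t)^2"
        using sum_squares_bound[of "y t" "v t"] sum_squares_bound[of "y t" "- v t"]
        by (simp add: abs_if power2_eq_square)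
      hence "\<bar>f t\<bar> * \<bar>2 * y t * v t\<bar> \<le> \<epsilon> * ((y t)^2 + (v t)^2)"
        using eps(1) by (intro mult_mono fe) auto
      thus ?thesis by (simp add: abs_mult)
    qed
    have cf: "c * f t * (y t)^2 \<ge> - c * \<epsilon> * (y t)^2"
    proof -
      have "c * (- \<epsilon>) \<le> c * f t" using fe c1 by (intro mult_left_mono) (auto simp: abs_le_iff)
      hence "(- c * \<epsilon>) * (y t)^2 \<le> (c * f t) * (y t)^2" by (intro mult_right_mono) auto
      thus ?thesis by simp
    qed
    have "t * D t \<le> - (c/2) * (v t)^2 - (c*a/2) * (y t)^2"
    proof -
      have h1: "c * \<epsilon> \<le> c * (a / 4)" using eps c1 by (intro mult_left_mono) auto
      have h2: "1 * (a / 4) \<le> c * (a / 4)" using c1 a by (intro mult_right_mono) auto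
      have "0 \<le> c/2 - \<epsilon>" using eps c1 by simp
      hence m1: "0 \<le> (c/2 - \<epsilon>) * (v t)^2" by simp
      have "0 \<le> c*a/2 - c*\<epsilon> - \<epsilon>" using h1 h2 eps by linarith
      hence m2: "0 \<le> (c*a/2 - c*\<epsilon> - \<epsilon>) * (y t)^2" by simp
      have tD': "t * D t = - c * (v t)^2 - c * (a + f t) * (y t)^2 - 2 * (f t * y t * v t)"
        using tD by (simp add: mult.assoc)
      have cr': "\<bar>2 * (f t * y t * v t)\<bar> \<le> \<epsilon> * ((y t)^2 + (v t)^2)"
        using cr by (simp add: mult.assoc)
      show ?thesis by (rule aux_ineq[OF tD' cr' cf m1 m2])
    qed
    moreover have "k * W t \<le> (c/2) * (v t)^2 + (c*a/2) * (y t)^2"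
    proof -
      have "c * y t * v t \<le> (c/2) * ((y t)^2 + (v t)^2)"
      proof -
        have "2 * y t * v t \<le> (y t)^2 + (v t)^2" using sum_squares_bound[of "y t" "v t"]
          by (simp add: power2_eq_square)
        hence "(c/2) * (2 * y t * v t) \<le> (c/2) * ((y t)^2 + (v t)^2)"
          using c1 by (intro mult_left_mono) auto
        thus ?thesis by simp
      qed
      hence "W t \<le> (1 + c/2) * (v t)^2 + (\<beta> + c/2) * (y t)^2"
        by (simp add: W_def algebra_simps)
      hence "k * W t \<le> k * (1 + c/2) * (v t)^2 + k * (\<beta> + c/2) * (y t)^2"
        using kpos by (smt (verit) mult_left_mono distrib_left mult.assoc)
      also have "\<dots> \<le> (c/2) * (v t)^2 + (c*a/2) * (y t)^2"
        using k1 k2 by (intro add_mono mult_right_mono) auto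
      finally show ?thesis .
    qed
    ultimately show ?thesis by linarith
  qed
  define h where "h t = t powr k * W t" for t
  have hdec: "h t \<le> h T" if t: "t \<ge> T" for t
  proof (rule DERIV_nonpos_imp_nonincreasing[OF t])
    fix x assume x: "T \<le> x" "x \<le> t"
    have xp: "x > 0" using x T by linarith
    have d: "(h has_real_derivative (k * x powr (k - 1) * W x + D x * x powr k)) (at x)"
      unfolding h_def[abs_def]
      by (rule DERIV_mult[OF has_real_derivative_powr[OF xp, of k] dW[OF xp]])
    have e1: "x powr k = x * x powr (k - 1)"
      using powr_mult_base[of x "k - 1"] xp by simp
    have e2: "k * x powr (k - 1) * W x + D x * (x * x powr (k - 1)) = x powr (k - 1) * (k * W x + x * D x)"
      by (simp add: algebra_simps)
    have e3: "x powr (k - 1) * (k * W x + x * D x) \<le> 0"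
      using key[OF x(1)] by (intro mult_nonneg_nonpos) auto
    have "k * x powr (k - 1) * W x + D x * x powr k \<le> 0"
      using e2 e3 unfolding e1 by linarith
    with d show "\<exists>y. (h has_real_derivative y) (at x) \<and> y \<le> 0" by blast
  qed
  have Wlow: "a * (y t)^2 \<le> W t" for t
  proof -
    have "W t - a * (y t)^2 = (v t + c * y t / 2)^2 + c^2/4 * (y t)^2"
      by (simp add: W_def \<beta>_def power2_eq_square algebra_simps)
    moreover have "(v t + c * y t / 2)^2 + c^2/4 * (y t)^2 \<ge> 0" by auto
    ultimately show ?thesis by linarith
  qed
  have bound: "(y t)^2 \<le> h T / a * t powr (- k)" if t: "t \<ge> T" for t
  proof -
    have tp: "t > 0" using t T by linarith
    have "t powr k * (a * (y t)^2) \<le> t powr k * W t"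
      using Wlow[of t] by (intro mult_left_mono) auto
    hence "t powr k * (a * (y t)^2) \<le> h T" using hdec[OF t] unfolding h_def by linarith
    moreover have pk: "a * t powr k > 0" using tp a by simp
    ultimately have "(y t)^2 * (a * t powr k) \<le> h T" by (simp add: algebra_simps)
    hence "(y t)^2 \<le> h T / (a * t powr k)" using pk by (simp add: pos_le_divide_eq)
    also have "h T / (a * t powr k) = h T / a * t powr (- k)"
      using tp by (simp add: powr_minus divide_inverse)
    finally show ?thesis .
  qed
  have lim: "((\<lambda>t. h T / a * t powr (- k)) \<longlongrightarrow> 0) at_top"
  proof -
    have "((\<lambda>t. t powr (- k)) \<longlongrightarrow> 0) at_top"
      by (rule tendsto_neg_powr[of "-k" "\<lambda>x. x" at_top]) (use kpos filterlim_ident in auto)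
    from tendsto_mult[OF tendsto_const this, of "h T / a"] show ?thesis by simp
  qed
  have sq: "((\<lambda>t. (y t)^2) \<longlongrightarrow> 0) at_top"
  proof (rule tendsto_sandwich[OF _ _ tendsto_const lim])
    show "\<forall>\<^sub>F t in at_top. 0 \<le> (y t)^2" by auto
    show "\<forall>\<^sub>F t in at_top. (y t)^2 \<le> h T / a * t powr (- k)"
      using bound by (auto simp: eventually_at_top_linorder)
  qed
  have "((\<lambda>t. sqrt ((y t)^2)) \<longlongrightarrow> sqrt 0) at_top" by (intro tendsto_real_sqrt sq)
  hence "((\<lambda>t. \<bar>y t\<bar>) \<longlongrightarrow> 0) at_top" by simp
  thus ?thesis by (simp add: tendsto_rabs_zero_iff)
qed

end
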